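(* Let $k\geq 2$ be an integer. For every finite simple graph $G$ with minimum degree $\delta(G)\geq k-1$, $$\gamma_{\times k}(G)\leq k\,\gamma_{k}(G)-(k-1)^2.$$
   Context: All graphs are finite and simple, with vertex set $V(G)$. For $v\in V(G)$, $N(v)$ is its open neighbourhood, and for $D\subseteq V(G)$, $\deg_D(v)=|N(v)\cap D|$. $\delta(G)$ denotes the minimum degree of $G$. A set $D\subseteq V(G)$ is a $k$-dominating set of $G$ if $\deg_D(v)\geq k$ for every $v\in V(G)\setminus D$; the $k$-domination number $\gamma_k(G)$ is the minimum cardinality of a $k$-dominating set. For a positive integer $k\leq \delta(G)+1$, a $k$-tuple dominating set of $G$ is a $k$-dominating set $D$ such that additionally $\deg_D(v)\geq k-1$ for every $v\in D$ (equivalently, every vertex has at least $k$ vertices of $D$ in its closed neighbourhood); the $k$-tuple domination number $\gamma_{\times k}(G)$ is the minimum cardinality of a $k$-tuple dominating set. *)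

theory Defs
  imports Main
begin

definition simple_graph :: "'a set \<Rightarrow> ('a \<Rightarrow> 'a \<Rightarrow> bool) \<Rightarrow> bool" where
  "simple_graph V E \<longleftrightarrow> finite V \<and> (\<forall>u v. E u v \<longrightarrow> u \<in> V \<and> v \<in> V)
     \<and> (\<forall>u v. E u v \<longrightarrow> E v u) \<and> (\<forall>v. \<not> E v v)"

definition nbhd :: "'a set \<Rightarrow> ('a \<Rightarrow> 'a \<Rightarrow> bool) \<Rightarrow> 'a \<Rightarrow> 'a set" where
  "nbhd V E v = {u \<in> V. E v u}"

definition deg_in :: "'a set \<Rightarrow> ('a \<Rightarrow> 'a \<Rightarrow> bool) \<Rightarrow> 'a set \<Rightarrow> 'a \<Rightarrow> nat" where
  "deg_in V E D v = card (nbhd V E v \<inter> D)"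

definition min_degree :: "'a set \<Rightarrow> ('a \<Rightarrow> 'a \<Rightarrow> bool) \<Rightarrow> nat" where
  "min_degree V E = Min ((\<lambda>v. card (nbhd V E v)) ` V)"

definition k_dominating :: "'a set \<Rightarrow> ('a \<Rightarrow> 'a \<Rightarrow> bool) \<Rightarrow> nat \<Rightarrow> 'a set \<Rightarrow> bool" where
  "k_dominating V E k D \<longleftrightarrow> D \<subseteq> V \<and> (\<forall>v \<in> V - D. deg_in V E D v \<ge> k)"

definition k_tuple_dominating :: "'a set \<Rightarrow> ('a \<Rightarrow> 'a \<Rightarrow> bool) \<Rightarrow> nat \<Rightarrow> 'a set \<Rightarrow> bool" where
  "k_tuple_dominating V E k D \<longleftrightarrow> k_dominating V E k D \<and> (\<forall>v \<in> D. deg_in V E D v + 1 \<ge> k)"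

definition k_domination_number :: "'a set \<Rightarrow> ('a \<Rightarrow> 'a \<Rightarrow> bool) \<Rightarrow> nat \<Rightarrow> nat" where
  "k_domination_number V E k = Min (card ` {D. k_dominating V E k D})"

definition k_tuple_domination_number :: "'a set \<Rightarrow> ('a \<Rightarrow> 'a \<Rightarrow> bool) \<Rightarrow> nat \<Rightarrow> nat" where
  "k_tuple_domination_number V E k = Min (card ` {D. k_tuple_dominating V E k D})"

end

theory Submission
  imports Defs
begin

lemma card_filter_sum:
  assumes "finite A"
  shows "card {x\<in>A. P x} = (\<Sum>x\<in>A. if P x then 1 else 0::nat)"
  using assms by (simp add: sum.If_cases Int_def)

theorem mainTheorem1:
  fixes V :: "'a set" and E :: "'a \<Rightarrow> 'a \<Rightarrow> bool" and k :: nat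
  assumes "simple_graph V E" and "V \<noteq> {}" and "k \<ge> 2"
    and "min_degree V E \<ge> k - 1"
  shows "int (k_tuple_domination_number V E k)
           \<le> int k * int (k_domination_number V E k) - (int k - 1)^2"
proof -
  have fin: "finite V" and sym: "\<And>u v. E u v \<Longrightarrow> E v u" and irr: "\<And>v. \<not> E v v"
    using assms(1) unfolding simple_graph_def by auto
  define N where "N = nbhd V E"
  have Nsub: "\<And>v. N v \<subseteq> V" unfolding N_def nbhd_def by auto
  have Nfin: "\<And>v. finite (N v)" using Nsub fin finite_subset by blast
  have NE: "\<And>u v. u \<in> N v \<longleftrightarrow> u \<in> V \<and> E v u" unfolding N_def nbhd_def by auto
  have degV: "\<And>v. v \<in> V \<Longrightarrow> k - 1 \<le> card (N v)"
  proof -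
    fix v assume "v \<in> V"
    hence "min_degree V E \<le> card (N v)" unfolding min_degree_def N_def
      using fin by (intro Min_le) auto
    thus "k - 1 \<le> card (N v)" using assms(4) by linarith
  qed
  have deg: "\<And>D v. deg_in V E D v = card (N v \<inter> D)" unfolding deg_in_def N_def by simp
  have mono: "\<And>D D' v. D \<subseteq> D' \<Longrightarrow> deg_in V E D v \<le> deg_in V E D' v"
    unfolding deg using Nfin by (meson card_mono finite_Int inf_mono order_refl)
  define S where "S = {D. k_dominating V E k D}"
  have "S \<subseteq> Pow V" unfolding S_def k_dominating_def by auto
  hence finS: "finite S" using fin by (meson finite_Pow_iff finite_subset)
  have "V \<in> S" unfolding S_def k_dominating_def by auto
  hence "card ` S \<noteq> {}" by auto
  hence "k_domination_number V E k \<in> card ` S"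
    unfolding k_domination_number_def S_def[symmetric] using finS by (intro Min_in) auto
  then obtain D where DS: "D \<in> S" and cD: "card D = k_domination_number V E k" by auto
  have Dsub: "D \<subseteq> V" and Ddom: "\<And>v. v \<in> V - D \<Longrightarrow> k \<le> deg_in V E D v"
    using DS unfolding S_def k_dominating_def by auto
  have Dfin: "finite D" using Dsub fin finite_subset by blast
  define d where "d = card D"
  have dk: "k \<le> d"
  proof (cases "D = V")
    case True
    obtain v where v: "v \<in> V" using assms(2) by auto
    have "N v \<subseteq> V - {v}" using Nsub NE irr by auto
    hence "card (N v) \<le> card (V - {v})" using fin by (intro card_mono) auto
    also have "\<dots> = card V - 1" using v fin by simp
    finally have c1: "card (N v) \<le> card V - 1" .
    have "0 < card V" using fin v by (auto simp: card_gt_0_iff)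
    thus ?thesis using c1 degV[OF v] assms(3) unfolding d_def True by linarith
  next
    case False
    then obtain w where "w \<in> V - D" using Dsub by auto
    hence "k \<le> card (N w \<inter> D)" using Ddom deg by metis
    also have "\<dots> \<le> d" unfolding d_def using Dfin by (intro card_mono) auto
    finally show ?thesis .
  qed
  have main: "\<exists>T. k_tuple_dominating V E k T \<and> int (card T) \<le> int k * int d - (int k - 1)^2"
  proof (cases "card (V - D) \<le> k - 1")
    case True
    have "k_tuple_dominating V E k V"
      unfolding k_tuple_dominating_def k_dominating_def
    proof (intro conjI ballI)
      fix v assume "v \<in> V"
      have "N v \<inter> V = N v" using Nsub by auto
      then show "k \<le> deg_in V E V v + 1" using degV[OF \<open>v \<in> V\<close>] deg[of V v] assms(3) by simp
    qed auto
    moreover have "card V = d + card (V - D)" unfolding d_def using Dsub fin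
      by (metis Diff_partition card_Un_disjoint Diff_disjoint finite_Diff finite_subset)
    moreover have "int (k - 1) * (int d - int k) \<ge> 0" using dk by simp
    ultimately show ?thesis using True assms(3)
      by (intro exI[of _ V]) (auto simp: algebra_simps power2_eq_square of_nat_diff)
  next
    case False
    hence "k - 1 \<le> card (V - D)" by linarith
    then obtain U0 where U0: "U0 \<subseteq> V - D" "card U0 = k - 1" "finite U0"
      by (rule obtain_subset_with_card_n)
    define B where "B = D \<union> U0"
    define r where "r v = k - 1 - card (N v \<inter> B)" for v
    have "\<forall>v\<in>D. \<exists>A. A \<subseteq> N v - B \<and> card A = r v"
    proof
      fix v assume "v \<in> D"
      hence "k - 1 \<le> card (N v)" using degV Dsub by auto
      moreover have "card (N v - B) = card (N v) - card (N v \<inter> B)"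
        using Nfin by (intro card_Diff_subset_Int) auto
      ultimately have "r v \<le> card (N v - B)" unfolding r_def by linarith
      thus "\<exists>A. A \<subseteq> N v - B \<and> card A = r v" by (meson obtain_subset_with_card_n)
    qed
    from bchoice[OF this] obtain A where A': "\<forall>v\<in>D. A v \<subseteq> N v - B \<and> card (A v) = r v" by blast
    hence A: "\<And>v. v \<in> D \<Longrightarrow> A v \<subseteq> N v - B \<and> card (A v) = r v" by blast
    define T where "T = B \<union> (\<Union>v\<in>D. A v)"
    have Tsub: "T \<subseteq> V" unfolding T_def B_def using Dsub U0 A Nsub by blast
    have BT: "B \<subseteq> T" unfolding T_def by auto
    have DT: "D \<subseteq> T" unfolding T_def B_def by auto
    have Tfin: "finite T" using Tsub fin finite_subset by blast
    have tup: "k_tuple_dominating V E k T"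
      unfolding k_tuple_dominating_def k_dominating_def
    proof (intro conjI ballI)
      show "T \<subseteq> V" by (rule Tsub)
    next
      fix w assume "w \<in> V - T"
      hence "w \<in> V - D" using DT by auto
      thus "k \<le> deg_in V E T w" using Ddom mono[OF DT] order_trans by blast
    next
      fix w assume w: "w \<in> T"
      show "k \<le> deg_in V E T w + 1"
      proof (cases "w \<in> D")
        case True
        have sub: "(N w \<inter> B) \<union> A w \<subseteq> N w \<inter> T" using A[OF True] BT T_def True by auto
        have disj: "(N w \<inter> B) \<inter> A w = {}" using A[OF True] by auto
        have "card ((N w \<inter> B) \<union> A w) = card (N w \<inter> B) + r w"
          using A[OF True] Nfin disj by (subst card_Un_disjoint) (auto intro: finite_subset)
        moreover have "card ((N w \<inter> B) \<union> A w) \<le> card (N w \<inter> T)"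
          using sub Nfin by (intro card_mono) auto
        ultimately show ?thesis unfolding deg r_def by linarith
      next
        case False
        hence "w \<in> V - D" using w Tsub by auto
        thus ?thesis using Ddom mono[OF DT, of w] by fastforce
      qed
    qed
    define c where "c v = card (N v \<inter> U0)" for v
    have rc: "\<And>v. r v \<le> k - 1 - c v"
    proof -
      fix v
      have "c v \<le> card (N v \<inter> B)" unfolding c_def B_def using Nfin
        by (intro card_mono) auto
      thus "r v \<le> k - 1 - c v" unfolding r_def by linarith
    qed
    have ck: "\<And>v. c v \<le> k - 1" unfolding c_def using card_mono[OF U0(3) inf_le2] U0(2) by metis
    have dc: "(\<Sum>v\<in>D. c v) = (\<Sum>u\<in>U0. card (N u \<inter> D))"
    proof -
      have "(\<Sum>v\<in>D. c v) = (\<Sum>v\<in>D. \<Sum>u\<in>U0. if E v u then 1 else 0::nat)"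
      proof (rule sum.cong)
        fix v assume "v \<in> D"
        have "N v \<inter> U0 = {u\<in>U0. E v u}" using NE U0 by auto
        thus "c v = (\<Sum>u\<in>U0. if E v u then 1 else 0)" unfolding c_def
          using card_filter_sum[OF U0(3)] by simp
      qed simp
      also have "\<dots> = (\<Sum>u\<in>U0. \<Sum>v\<in>D. if E v u then 1 else 0::nat)" by (rule sum.swap)
      also have "\<dots> = (\<Sum>u\<in>U0. card (N u \<inter> D))"
      proof (rule sum.cong)
        fix u assume "u \<in> U0"
        have "N u \<inter> D = {v\<in>D. E v u}" using NE Dsub sym by auto
        thus "(\<Sum>v\<in>D. if E v u then 1 else 0) = card (N u \<inter> D)"
          using card_filter_sum[OF Dfin] by simp
      qed simp
      finally show ?thesis .
    qed
    have "(\<Sum>u\<in>U0. k) \<le> (\<Sum>u\<in>U0. card (N u \<inter> D))"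
    proof (rule sum_mono)
      fix u assume "u \<in> U0"
      hence "u \<in> V - D" using U0 by auto
      thus "k \<le> card (N u \<inter> D)" using Ddom deg by metis
    qed
    hence csum: "(k - 1) * k \<le> (\<Sum>v\<in>D. c v)" using dc U0 by simp
    have "card T \<le> card B + card (\<Union>v\<in>D. A v)" unfolding T_def by (rule card_Un_le)
    also have "card B \<le> d + (k - 1)" unfolding B_def d_def using card_Un_le[of D U0] U0(2) by simp
    also have "card (\<Union>v\<in>D. A v) \<le> (\<Sum>v\<in>D. card (A v))" by (rule card_UN_le[OF Dfin])
    also have "\<dots> \<le> (\<Sum>v\<in>D. k - 1 - c v)" using A rc by (intro sum_mono) auto
    finally have cT: "card T \<le> d + (k - 1) + (\<Sum>v\<in>D. k - 1 - c v)" by simp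
    have "int (\<Sum>v\<in>D. k - 1 - c v) = (\<Sum>v\<in>D. int (k - 1) - int (c v))"
      unfolding of_nat_sum by (intro sum.cong refl) (metis ck of_nat_diff)
    also have "\<dots> = int d * int (k - 1) - int (\<Sum>v\<in>D. c v)"
      by (simp add: sum_subtractf d_def)
    finally have "int (card T) \<le> int d + int (k - 1) + int d * int (k - 1) - int ((k - 1) * k)"
      using cT csum by linarith
    hence "int (card T) \<le> int k * int d - (int k - 1)^2"
      using assms(3) by (simp add: of_nat_diff algebra_simps power2_eq_square)
    thus ?thesis using tup by blast
  qed
  then obtain T where T: "k_tuple_dominating V E k T"
    and Tc: "int (card T) \<le> int k * int d - (int k - 1)^2" by blast
  have "{D. k_tuple_dominating V E k D} \<subseteq> Pow V"
    unfolding k_tuple_dominating_def k_dominating_def by auto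
  hence "finite {D. k_tuple_dominating V E k D}" using fin by (meson finite_Pow_iff finite_subset)
  hence "k_tuple_domination_number V E k \<le> card T"
    unfolding k_tuple_domination_number_def using T by (intro Min_le) auto
  hence "int (k_tuple_domination_number V E k) \<le> int (card T)" by simp
  thus ?thesis using Tc unfolding d_def cD by linarith
qed

end
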